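(* Let $d\ge2$ and let $A$ be the adjacency matrix of a tournament of Type (3) with $n=2d$ vertices whose Seidel matrix $S$ has spectrum $\{(-\theta)^1,(-\phi)^{d-1},\phi^{d-1},\theta^1\}$ with $0<\phi<\theta$ (exponents denote multiplicities). Then $d$ is odd and $S^2$ is permutationally similar to \[\begin{pmatrix}kI+lJ&0\\0&kI+lJ\end{pmatrix}\] (blocks of size $d$) for some positive integers $k,l$.
   Context: A tournament on vertex set $V$ is an orientation of the complete graph on $V$; its adjacency matrix $A$ has $A_{xy}=1$ if $x\to y$ and $0$ otherwise, and its Seidel matrix is $S=\sqrt{-1}(A-A^T)$. Let $\tau_1<\cdots<\tau_s$ be the distinct eigenvalues of $S$ with multiplicities $m_i$, and main angles $\beta_i=\frac1{\sqrt n}\|E_ij\|$, where $E_i$ is the orthogonal projection onto the $\tau_i$-eigenspace and $j$ the all-ones vector. The tournament is of Type (1) if $\beta_1=0$; of Type (2) if $\beta_1\neq0$ and $m_1>1$; of Type (3) if $m_1=1$, $\beta_2=0$ and $c_2<0$, where $c_2=n\beta_1^2/(\tau_1-\tau_2)+\sum_{i=3}^s n\beta_i^2/(\tau_i-\tau_2)$; and of Type (4) otherwise. $I$ and $J$ are the identity and all-ones matrices; two matrices $M,N$ are permutationally similar if $N=PMP^T$ for a permutation matrix $P$. *)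

theory Defs
  imports "Jordan_Normal_Form.Determinant" "Jordan_Normal_Form.Char_Poly"
begin

definition tournament_adj :: "nat \<Rightarrow> int mat \<Rightarrow> bool" where
  "tournament_adj n A \<longleftrightarrow> A \<in> carrier_mat n n \<and>
     (\<forall>x<n. A $$ (x,x) = 0) \<and>
     (\<forall>x<n. \<forall>y<n. x \<noteq> y \<longrightarrow>
        (A $$ (x,y) = 1 \<and> A $$ (y,x) = 0) \<or> (A $$ (x,y) = 0 \<and> A $$ (y,x) = 1))"

definition seidel :: "int mat \<Rightarrow> complex mat" where
  "seidel A = \<i> \<cdot>\<^sub>m map_mat complex_of_int (A - transpose_mat A)"

(* distinct eigenvalues tau_1 < ... < tau_s (0-indexed list); S is Hermitian so all are real *)
definition distinct_eigs :: "complex mat \<Rightarrow> real list" where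
  "distinct_eigs S = sorted_list_of_set {t::real. eigenvalue S (complex_of_real t)}"

definition eig_mult :: "complex mat \<Rightarrow> real \<Rightarrow> nat" where
  "eig_mult S t = order (complex_of_real t) (char_poly S)"

definition cinner :: "complex vec \<Rightarrow> complex vec \<Rightarrow> complex" where
  "cinner u v = (\<Sum>k<dim_vec u. u $ k * cnj (v $ k))"

definition eigenspace :: "complex mat \<Rightarrow> real \<Rightarrow> complex vec set" where
  "eigenspace S t = {v \<in> carrier_vec (dim_row S). S *\<^sub>v v = complex_of_real t \<cdot>\<^sub>v v}"

definition eig_proj :: "complex mat \<Rightarrow> real \<Rightarrow> complex vec \<Rightarrow> complex vec" where
  "eig_proj S t x = (THE w. w \<in> eigenspace S t \<and> (\<forall>u\<in>eigenspace S t. cinner (x - w) u = 0))"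

definition cnorm :: "complex vec \<Rightarrow> real" where
  "cnorm v = sqrt (\<Sum>k<dim_vec v. (cmod (v $ k))\<^sup>2)"

definition main_angle :: "complex mat \<Rightarrow> real \<Rightarrow> real" where
  "main_angle S t = cnorm (eig_proj S t (vec (dim_row S) (\<lambda>_. 1))) / sqrt (real (dim_row S))"

(* Type (3), with 0-based indices: tau_1 = \<tau>!0, tau_2 = \<tau>!1 *)
definition type3 :: "nat \<Rightarrow> int mat \<Rightarrow> bool" where
  "type3 n A \<longleftrightarrow> tournament_adj n A \<and>
     (let S = seidel A; \<tau> = distinct_eigs S; s = length \<tau>; \<beta> = (\<lambda>i. main_angle S (\<tau> ! i));
          c2 = real n * (\<beta> 0)\<^sup>2 / (\<tau>!0 - \<tau>!1)
               + (\<Sum>i\<in>{2..<s}. real n * (\<beta> i)\<^sup>2 / (\<tau>!i - \<tau>!1))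
      in s \<ge> 2 \<and> eig_mult S (\<tau>!0) = 1 \<and> \<beta> 1 = 0 \<and> c2 < 0)"

definition perm_mat :: "nat \<Rightarrow> (nat \<Rightarrow> nat) \<Rightarrow> 'a::{zero,one} mat" where
  "perm_mat n p = mat n n (\<lambda>(i,j). if p i = j then 1 else 0)"

definition perm_similar :: "nat \<Rightarrow> 'a::comm_ring_1 mat \<Rightarrow> 'a mat \<Rightarrow> bool" where
  "perm_similar n M N \<longleftrightarrow> (\<exists>p. p permutes {..<n} \<and>
      N = perm_mat n p * M * transpose_mat (perm_mat n p))"

(* block matrix diag(kI+lJ, kI+lJ) with blocks of size d *)
definition block_kIlJ :: "nat \<Rightarrow> 'a::comm_ring_1 \<Rightarrow> 'a \<Rightarrow> 'a mat" where
  "block_kIlJ d k l = mat (2*d) (2*d)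
     (\<lambda>(i,j). if (i < d) = (j < d) then (if i = j then k else 0) + l else 0)"

end

theory Submission
  imports Defs "Jordan_Normal_Form.Schur_Decomposition"
begin

lemma partA_sq:
  fixes n :: nat and tf :: "nat \<Rightarrow> nat \<Rightarrow> int" and m :: "nat \<Rightarrow> nat \<Rightarrow> real"
  assumes anti: "\<And>x y. x < n \<Longrightarrow> y < n \<Longrightarrow> tf y x = - tf x y"
    and pm1: "\<And>x y. x < n \<Longrightarrow> y < n \<Longrightarrow> x \<noteq> y \<Longrightarrow> tf x y = 1 \<or> tf x y = -1"
    and diag0: "\<And>x. x < n \<Longrightarrow> tf x x = 0"
    and mdef: "\<And>x z. m x z = - (\<Sum>y<n. real_of_int (tf x y) * real_of_int (tf y z))"
  shows "\<And>x z. x < n \<Longrightarrow> z < n \<Longrightarrow> m x z = m z x"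
    and "\<And>x. x < n \<Longrightarrow> m x x = real n - 1"
proof -
  fix x z assume x: "x < n" and z: "z < n"
  show "m x z = m z x" unfolding mdef
  proof -
    have "\<And>y. y < n \<Longrightarrow> real_of_int (tf x y) * real_of_int (tf y z) = real_of_int (tf z y) * real_of_int (tf y x)"
    proof -
      fix y assume y: "y < n"
      have "tf x y = - tf y x" using anti[OF y x] by simp
      moreover have "tf y z = - tf z y" using anti[OF z y] by simp
      ultimately show "real_of_int (tf x y) * real_of_int (tf y z) = real_of_int (tf z y) * real_of_int (tf y x)" by simp
    qed
    then show "- (\<Sum>y<n. real_of_int (tf x y) * real_of_int (tf y z)) = - (\<Sum>y<n. real_of_int (tf z y) * real_of_int (tf y x))"
      by simp
  qed
next
  fix x assume x: "x < n"
  have "(\<Sum>y<n. real_of_int (tf x y) * real_of_int (tf y x)) = (\<Sum>y\<in>{..<n}-{x}. -1)"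
  proof -
    have "(\<Sum>y<n. real_of_int (tf x y) * real_of_int (tf y x)) =
          (\<Sum>y\<in>{..<n}-{x}. real_of_int (tf x y) * real_of_int (tf y x))"
      by (rule sum.mono_neutral_right, auto simp: diag0 x)
    also have "\<dots> = (\<Sum>y\<in>{..<n}-{x}. -1)"
      apply (rule sum.cong, simp)
      subgoal for y using pm1[of x y] anti[of x y] x by auto
      done
    finally show ?thesis .
  qed
  also have "\<dots> = - (real n - 1)" using x by (simp add: card_Diff_singleton)
  finally show "m x x = real n - 1" unfolding mdef by simp
qed

lemma partA:
  fixes n d :: nat and tf :: "nat \<Rightarrow> nat \<Rightarrow> int" and m :: "nat \<Rightarrow> nat \<Rightarrow> real" and \<theta> \<phi> :: real
  assumes n: "n = 2*d" and d2: "d \<ge> 2"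
    and anti: "\<And>x y. x < n \<Longrightarrow> y < n \<Longrightarrow> tf y x = - tf x y"
    and pm1: "\<And>x y. x < n \<Longrightarrow> y < n \<Longrightarrow> x \<noteq> y \<Longrightarrow> tf x y = 1 \<or> tf x y = -1"
    and diag0: "\<And>x. x < n \<Longrightarrow> tf x x = 0"
    and mdef: "\<And>x z. m x z = - (\<Sum>y<n. real_of_int (tf x y) * real_of_int (tf y z))"
    and ph: "0 < \<phi>" "\<phi> < \<theta>"
    and F1: "\<And>x z. x<n \<Longrightarrow> z<n \<Longrightarrow> (\<Sum>y<n. (m x y - (if x = y then \<phi>\<^sup>2 else 0)) * (m y z - (if y = z then \<theta>\<^sup>2 else 0))) = 0"
    and rows: "\<And>x. x < n \<Longrightarrow> (\<Sum>y<n. m x y) = \<theta>\<^sup>2"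
    and tr: "(\<Sum>x<n. m x x) = 2*(real d - 1)*\<phi>\<^sup>2 + 2*\<theta>\<^sup>2"
  shows "odd d \<and> (\<exists>s::nat\<Rightarrow>bool. card {x. x<n \<and> s x} = d \<and> (\<exists>k l::nat. k>0 \<and> l>0 \<and>
     (\<forall>x<n. \<forall>z<n. m x z = (if s x = s z then (if x = z then real k else 0) + real l else 0))))"
proof -
  note sq = partA_sq[OF anti pm1 diag0 mdef]
  have msym: "\<And>x z. x < n \<Longrightarrow> z < n \<Longrightarrow> m x z = m z x" using sq(1) by blast
  have mdiag: "\<And>x. x < n \<Longrightarrow> m x x = real n - 1" using sq(2) by blast
  define T where "T x y = real_of_int (tf x y)" for x y
  have Tanti: "T y x = - T x y" if "x < n" "y < n" for x y unfolding T_def using anti[OF that] by simp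
  have mT: "\<And>x z. m x z = - (\<Sum>y<n. T x y * T y z)" unfolding T_def mdef ..
  define \<delta> where "\<delta> = \<theta>\<^sup>2 - \<phi>\<^sup>2"
  have th0: "\<theta> > 0" using ph by simp
  have dpos: "\<delta> > 0" unfolding \<delta>_def using ph by (simp add: power_strict_mono)
  have npos: "n > 0" using n d2 by simp
  define N where "N x y = m x y - (if x = y then \<phi>\<^sup>2 else 0)" for x y
  have Nsym: "N x z = N z x" if "x < n" "z < n" for x z unfolding N_def using msym[OF that] by simp
  have NN: "(\<Sum>y<n. N x y * N y z) = \<delta> * N x z" if x: "x < n" and z: "z < n" for x z
  proof -
    have "0 = (\<Sum>y<n. N x y * (N y z - (if y = z then \<delta> else 0)))"
      using F1[OF x z] unfolding N_def \<delta>_def by (simp add: algebra_simps if_distrib cong: if_cong)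
    also have "\<dots> = (\<Sum>y<n. N x y * N y z) - (\<Sum>y<n. N x y * (if y = z then \<delta> else 0))"
      by (simp add: right_diff_distrib sum_subtractf)
    also have "(\<Sum>y<n. N x y * (if y = z then \<delta> else 0)) = (\<Sum>y<n. (if y = z then N x z * \<delta> else 0))"
      by (rule sum.cong) auto
    also have "\<dots> = \<delta> * N x z" using z by simp
    finally show ?thesis by simp
  qed
  have Nrow: "(\<Sum>y<n. N x y) = \<delta>" if x: "x < n" for x
  proof -
    have "(\<Sum>y<n. N x y) = (\<Sum>y<n. m x y) - (\<Sum>y<n. (if x = y then \<phi>\<^sup>2 else 0))"
      unfolding N_def by (simp add: sum_subtractf)
    also have "\<dots> = \<theta>\<^sup>2 - \<phi>\<^sup>2" using rows[OF x] x by simp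
    finally show ?thesis unfolding \<delta>_def .
  qed
  define t where "t x = (\<Sum>y<n. T x y)" for x
  have tsum: "(\<Sum>x<n. t x) = 0"
  proof -
    have "(\<Sum>x<n. t x) = (\<Sum>y<n. \<Sum>x<n. T x y)" unfolding t_def by (rule sum.swap)
    also have "\<dots> = (\<Sum>y<n. \<Sum>x<n. - T y x)" by (intro sum.cong refl) (metis Tanti lessThan_iff)
    also have "\<dots> = - (\<Sum>x<n. t x)" unfolding t_def by (simp add: sum_negf)
    finally show ?thesis by simp
  qed
  have Tt: "(\<Sum>y<n. T x y * t y) = - \<theta>\<^sup>2" if x: "x < n" for x
  proof -
    have "(\<Sum>y<n. T x y * t y) = (\<Sum>y<n. \<Sum>z<n. T x y * T y z)" unfolding t_def by (simp add: sum_distrib_left)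
    also have "\<dots> = (\<Sum>z<n. \<Sum>y<n. T x y * T y z)" by (rule sum.swap)
    also have "\<dots> = (\<Sum>z<n. - m x z)" unfolding mT by simp
    also have "\<dots> = - \<theta>\<^sup>2" using rows[OF x] by (simp add: sum_negf)
    finally show ?thesis .
  qed
  have Mt: "(\<Sum>y<n. m x y * t y) = \<theta>\<^sup>2 * t x" if x: "x < n" for x
  proof -
    have "(\<Sum>y<n. m x y * t y) = (\<Sum>y<n. \<Sum>k<n. - (T x k * T k y * t y))"
      unfolding mT by (simp add: sum_distrib_right sum_negf)
    also have "\<dots> = (\<Sum>k<n. \<Sum>y<n. - (T x k * T k y * t y))" by (rule sum.swap)
    also have "\<dots> = (\<Sum>k<n. - T x k * (\<Sum>y<n. T k y * t y))"
      by (simp add: sum_distrib_left sum_negf mult.assoc)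
    also have "\<dots> = (\<Sum>k<n. \<theta>\<^sup>2 * T x k)" by (rule sum.cong, simp, simp add: Tt)
    also have "\<dots> = \<theta>\<^sup>2 * t x" unfolding t_def by (simp add: sum_distrib_left)
    finally show ?thesis .
  qed
  have Nt: "(\<Sum>y<n. N x y * t y) = \<delta> * t x" if x: "x < n" for x
  proof -
    have "(\<Sum>y<n. N x y * t y) = (\<Sum>y<n. m x y * t y) - (\<Sum>y<n. (if x = y then \<phi>\<^sup>2 else 0) * t y)"
      unfolding N_def by (simp add: left_diff_distrib sum_subtractf)
    also have "(\<Sum>y<n. (if x = y then \<phi>\<^sup>2 else 0) * t y) = (\<Sum>y<n. (if y = x then \<phi>\<^sup>2 * t x else 0))"
      by (rule sum.cong) auto
    also have "\<dots> = \<phi>\<^sup>2 * t x" using x by simp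
    also have "(\<Sum>y<n. m x y * t y) = \<theta>\<^sup>2 * t x" using Mt[OF x] .
    finally show ?thesis unfolding \<delta>_def by (simp add: algebra_simps)
  qed
  have tsq: "(\<Sum>x<n. t x * t x) = real n * \<theta>\<^sup>2"
  proof -
    have "(\<Sum>x<n. t x * t x) = (\<Sum>x<n. \<Sum>y<n. T x y * t x)" unfolding t_def[of x for x] 
      by (simp add: sum_distrib_right)
    also have "\<dots> = (\<Sum>y<n. \<Sum>x<n. T x y * t x)" by (rule sum.swap)
    also have "\<dots> = (\<Sum>y<n. - (\<Sum>x<n. T y x * t x))"
      by (intro sum.cong refl, simp add: sum_negf[symmetric], intro sum.cong refl) (metis Tanti lessThan_iff minus_mult_left)
    also have "\<dots> = (\<Sum>y<n. \<theta>\<^sup>2)" by (rule sum.cong, auto simp: Tt)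
    finally show ?thesis by simp
  qed
  have Ndiag: "N x x = real n - 1 - \<phi>\<^sup>2" if "x < n" for x unfolding N_def using mdiag[OF that] by simp
  have trN: "real n * (real n - 1 - \<phi>\<^sup>2) = 2 * \<delta>"
  proof -
    have "(\<Sum>x<n. m x x) = real n * (real n - 1)" using mdiag by simp
    with tr n show ?thesis unfolding \<delta>_def by (simp add: algebra_simps)
  qed
  define R where "R x z = N x z / \<delta> - 1 / real n - t x * t z / (real n * \<theta>\<^sup>2)" for x z
  have Rrow: "(\<Sum>z<n. R x z) = 0" if x: "x < n" for x
  proof -
    have "(\<Sum>z<n. R x z) = (\<Sum>z<n. N x z / \<delta> - 1 / real n - t x * t z / (real n * \<theta>\<^sup>2))"
      unfolding R_def by simp
    also have "\<dots> = (\<Sum>z<n. N x z) / \<delta> - real n * (1 / real n) - t x * (\<Sum>z<n. t z) / (real n * \<theta>\<^sup>2)"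
      by (simp add: sum_subtractf sum_divide_distrib[symmetric] sum_distrib_left[symmetric])
    also have "\<dots> = 0" using Nrow[OF x] tsum dpos npos by simp
    finally show ?thesis .
  qed
  have Rt: "(\<Sum>z<n. R x z * t z) = 0" if x: "x < n" for x
  proof -
    have "(\<Sum>z<n. R x z * t z) = (\<Sum>z<n. N x z * t z / \<delta> - t z / real n - t x * (t z * t z) / (real n * \<theta>\<^sup>2))"
      unfolding R_def using dpos npos th0 by (intro sum.cong refl) (simp add: field_simps)
    also have "\<dots> = (\<Sum>z<n. N x z * t z) / \<delta> - (\<Sum>z<n. t z) / real n - t x * (\<Sum>z<n. t z * t z) / (real n * \<theta>\<^sup>2)"
      by (simp add: sum_subtractf sum_divide_distrib[symmetric] sum_distrib_left[symmetric])
    also have "\<dots> = 0" using Nt[OF x] tsum tsq dpos npos th0 by simp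
    finally show ?thesis .
  qed
  have RN: "(\<Sum>z<n. R x z * N x z) = \<delta> * R x x" if x: "x < n" for x
  proof -
    have e: "(\<Sum>z<n. N x z * N z x) = (\<Sum>z<n. N x z * N x z)" by (intro sum.cong refl) (metis Nsym x lessThan_iff)
    have "(\<Sum>z<n. R x z * N x z) = (\<Sum>z<n. N x z * N x z / \<delta> - N x z / real n - t x * (N x z * t z) / (real n * \<theta>\<^sup>2))"
      unfolding R_def using dpos npos th0 by (intro sum.cong refl) (simp add: field_simps)
    also have "\<dots> = (\<Sum>z<n. N x z * N x z) / \<delta> - (\<Sum>z<n. N x z) / real n - t x * (\<Sum>z<n. N x z * t z) / (real n * \<theta>\<^sup>2)"
      by (simp add: sum_subtractf sum_divide_distrib[symmetric] sum_distrib_left[symmetric])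
    also have "(\<Sum>z<n. N x z * N x z) = \<delta> * N x x" using e NN[OF x x] by simp
    also have "\<delta> * N x x / \<delta> - (\<Sum>z<n. N x z) / real n - t x * (\<Sum>z<n. N x z * t z) / (real n * \<theta>\<^sup>2) = \<delta> * R x x"
      using Nrow[OF x] Nt[OF x] dpos npos th0 unfolding R_def by (simp add: field_simps)
    finally show ?thesis .
  qed
  have Rsq: "(\<Sum>z<n. R x z * R x z) = R x x" if x: "x < n" for x
  proof -
    have "(\<Sum>z<n. R x z * R x z) = (\<Sum>z<n. R x z * N x z / \<delta> - R x z / real n - t x * (R x z * t z) / (real n * \<theta>\<^sup>2))"
      unfolding R_def[of x z for z] using dpos npos th0 by (intro sum.cong refl) (simp add: field_simps)
    also have "\<dots> = (\<Sum>z<n. R x z * N x z) / \<delta> - (\<Sum>z<n. R x z) / real n - t x * (\<Sum>z<n. R x z * t z) / (real n * \<theta>\<^sup>2)"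
      by (simp add: sum_subtractf sum_divide_distrib[symmetric] sum_distrib_left[symmetric])
    also have "\<dots> = R x x" using RN[OF x] Rrow[OF x] Rt[OF x] dpos by simp
    finally show ?thesis .
  qed
  have trR: "(\<Sum>x<n. R x x) = 0"
  proof -
    have "(\<Sum>x<n. R x x) = (\<Sum>x<n. N x x / \<delta> - 1 / real n - t x * t x / (real n * \<theta>\<^sup>2))"
      unfolding R_def by simp
    also have "\<dots> = (\<Sum>x<n. N x x) / \<delta> - real n * (1 / real n) - (\<Sum>x<n. t x * t x) / (real n * \<theta>\<^sup>2)"
      by (simp add: sum_subtractf sum_divide_distrib[symmetric])
    also have "(\<Sum>x<n. N x x) = real n * (real n - 1 - \<phi>\<^sup>2)" using Ndiag by simp
    finally show ?thesis using trN tsq dpos npos th0 by simp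
  qed
  have R0: "R x z = 0" if x: "x < n" and z: "z < n" for x z
  proof -
    have "(\<Sum>x<n. \<Sum>z<n. R x z * R x z) = 0" using Rsq trR by simp
    then have "\<forall>x\<in>{..<n}. (\<Sum>z<n. R x z * R x z) = 0"
      by (subst sum_nonneg_eq_0_iff[symmetric], auto intro: sum_nonneg)
    then have "(\<Sum>z<n. R x z * R x z) = 0" using x by auto
    then have "\<forall>z\<in>{..<n}. R x z * R x z = 0" by (subst sum_nonneg_eq_0_iff[symmetric], auto)
    then show ?thesis using z by auto
  qed
  have N2: "N x x = 2 * \<delta> / real n" if "x < n" for x
  proof -
    have "real n * N x x = 2 * \<delta>" using Ndiag[OF that] trN by simp
    then show ?thesis using npos by (simp add: field_simps)
  qed
  have tt: "t x * t x = \<theta>\<^sup>2" if x: "x < n" for x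
  proof -
    have "N x x / \<delta> - 1 / real n - t x * t x / (real n * \<theta>\<^sup>2) = 0" using R0[OF x x] unfolding R_def .
    then have "2 / real n - 1 / real n = t x * t x / (real n * \<theta>\<^sup>2)" using N2[OF x] dpos by simp
    then show ?thesis using npos th0 by (simp add: field_simps)
  qed
  define s where "s x = (t x > 0)" for x
  have tv: "t x = (if s x then \<theta> else - \<theta>)" if x: "x < n" for x
  proof -
    have "(t x)\<^sup>2 = \<theta>\<^sup>2" using tt[OF x] by (simp add: power2_eq_square)
    then have "t x = \<theta> \<or> t x = - \<theta>" by (simp add: power2_eq_iff)
    then show ?thesis unfolding s_def using th0 by auto
  qed
  have mform: "m x z = (if x = z then \<phi>\<^sup>2 else 0) + (if s x = s z then 2 * \<delta> / real n else 0)"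
    if x: "x < n" and z: "z < n" for x z
  proof -
    have "N x z = \<delta> / real n + \<delta> * (t x * t z) / (real n * \<theta>\<^sup>2)"
      using R0[OF x z] dpos unfolding R_def by (simp add: field_simps)
    moreover have "t x * t z = (if s x = s z then \<theta>\<^sup>2 else - \<theta>\<^sup>2)"
      using tv[OF x] tv[OF z] by (auto simp: power2_eq_square)
    ultimately have "N x z = (if s x = s z then 2 * \<delta> / real n else 0)"
      using npos th0 by (auto simp: field_simps)
    then show ?thesis unfolding N_def by simp
  qed
  define P where "P = {y \<in> {..<n}. s y}"
  have finP: "finite P" unfolding P_def by simp
  have cardP: "card P = d"
  proof -
    have "0 = (\<Sum>x<n. t x)" using tsum by simp
    also have "\<dots> = (\<Sum>x<n. (if s x then \<theta> else - \<theta>))" by (rule sum.cong, auto simp: tv)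
    also have "\<dots> = (\<Sum>x\<in>{..<n} \<inter> {x. s x}. \<theta>) + (\<Sum>x\<in>{..<n} \<inter> - {x. s x}. - \<theta>)"
      by (rule sum.If_cases) simp
    also have "\<dots> = \<theta> * real (card P) - \<theta> * real (card ({..<n} - P))"
    proof -
      have e1: "{..<n} \<inter> {x. s x} = P" unfolding P_def by auto
      have e2: "{..<n} \<inter> - {x. s x} = {..<n} - P" unfolding P_def by auto
      show ?thesis unfolding e1 e2 by simp
    qed
    also have "card ({..<n} - P) = n - card P" by (subst card_Diff_subset, auto simp: P_def)
    finally have "real (card P) = real (n - card P)" using th0 by simp
    moreover have "card P \<le> n" unfolding P_def by (rule order.trans[OF card_mono[of "{..<n}"]], auto)
    ultimately show ?thesis using n by linarith
  qed
  obtain x0 where x0: "x0 \<in> P" using cardP d2 by (metis card.empty ex_in_conv not_numeral_le_zero)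
  have x0n: "x0 < n" and sx0: "s x0" using x0 unfolding P_def by auto
  have oddd: "odd d"
  proof -
    have "(\<Sum>y<n. T x0 y * (\<theta> + t y)) = \<theta> * t x0 + (\<Sum>y<n. T x0 y * t y)"
      unfolding t_def by (simp add: algebra_simps sum.distrib sum_distrib_left)
    also have "\<dots> = 0" using Tt[OF x0n] tv[OF x0n] sx0 by (simp add: power2_eq_square)
    finally have "0 = (\<Sum>y<n. T x0 y * (\<theta> + t y))" by simp
    also have "\<dots> = (\<Sum>y<n. if s y then 2 * \<theta> * T x0 y else 0)" by (rule sum.cong, auto simp: tv)
    also have "\<dots> = (\<Sum>y\<in>P. 2 * \<theta> * T x0 y)" unfolding P_def by (rule sum.inter_filter[symmetric]) simp
    also have "\<dots> = 2 * \<theta> * real_of_int (\<Sum>y\<in>P. tf x0 y)" unfolding T_def by (simp add: sum_distrib_left)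
    finally have s0r: "0 = 2 * \<theta> * real_of_int (\<Sum>y\<in>P. tf x0 y)" .
    have "real_of_int (\<Sum>y\<in>P. tf x0 y) = 0" using s0r th0 by (simp del: of_int_sum)
    then have s0: "(\<Sum>y\<in>P. tf x0 y) = 0" by (simp only: of_int_eq_0_iff)
    have "{y \<in> P. odd (tf x0 y)} = P - {x0}"
    proof
      show "{y \<in> P. odd (tf x0 y)} \<subseteq> P - {x0}" using diag0[OF x0n] by auto
      show "P - {x0} \<subseteq> {y \<in> P. odd (tf x0 y)}"
      proof
        fix y assume y: "y \<in> P - {x0}"
        then have "y < n" "y \<noteq> x0" unfolding P_def by auto
        then have "tf x0 y = 1 \<or> tf x0 y = -1" using pm1[OF x0n] by auto
        then show "y \<in> {y \<in> P. odd (tf x0 y)}" using y by auto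
      qed
    qed
    then have "even (card (P - {x0}))" using s0 even_sum_iff[OF finP, of "tf x0"] by simp
    then have "even (d - 1)" using cardP x0 finP by (simp add: card_Diff_singleton)
    then show ?thesis using d2 by (cases d) auto
  qed
  obtain z0 where z0: "z0 \<in> P" "z0 \<noteq> x0"
  proof -
    have "card (P - {x0}) = d - 1" using cardP x0 finP by (simp add: card_Diff_singleton)
    then have "P - {x0} \<noteq> {}" using d2 by (metis card.empty diff_is_0_eq not_numeral_le_zero one_le_numeral order.trans Suc_1 Suc_le_eq diff_Suc_1 less_numeral_extra(3) zero_less_diff)
    then show ?thesis using that by blast
  qed
  have z0n: "z0 < n" and sz0: "s z0" using z0 unfolding P_def by auto
  define Lint where "Lint = - (\<Sum>y<n. tf x0 y * tf y z0)"
  have mL: "m x0 z0 = real_of_int Lint" unfolding mdef Lint_def by simp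
  have lval: "real_of_int Lint = 2 * \<delta> / real n" using mform[OF x0n z0n] mL z0 sx0 sz0 by simp
  have "real_of_int Lint > 0" unfolding lval using dpos npos by simp
  then have Lpos: "Lint > 0" by (simp only: of_int_0_less_iff)
  define Kint where "Kint = int n - 1 - Lint"
  have kval: "real_of_int Kint = \<phi>\<^sup>2" using mform[OF x0n x0n] mdiag[OF x0n] lval unfolding Kint_def by simp
  have "real_of_int Kint > 0" unfolding kval using ph by simp
  then have Kpos: "Kint > 0" by (simp only: of_int_0_less_iff)
  show ?thesis
  proof (intro conjI exI)
    show "odd d" by fact
    show "card {x. x < n \<and> s x} = d" using cardP unfolding P_def by (simp add: conj_commute)
    show "0 < nat Kint" using Kpos by simp
    show "0 < nat Lint" using Lpos by simp
    show "\<forall>x<n. \<forall>z<n. m x z = (if s x = s z then (if x = z then real (nat Kint) else 0) + real (nat Lint) else 0)"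
    proof (intro allI impI)
      fix x z assume x: "x < n" and z: "z < n"
      have k: "real (nat Kint) = \<phi>\<^sup>2" using Kpos kval by simp
      have l: "real (nat Lint) = 2 * \<delta> / real n" using Lpos lval by simp
      show "m x z = (if s x = s z then (if x = z then real (nat Kint) else 0) + real (nat Lint) else 0)"
        unfolding k l mform[OF x z] by auto
    qed
  qed
qed

lemma mult_entry:
  assumes "A \<in> carrier_mat nr n" "B \<in> carrier_mat n nc" "i < nr" "j < nc"
  shows "(A * B) $$ (i,j) = (\<Sum>k<n. A $$ (i,k) * B $$ (k,j))"
  using assms by (simp add: scalar_prod_def atLeast0LessThan row_def col_def)

lemma shift_carrier[simp]: "B \<in> carrier_mat n n \<Longrightarrow> B - e \<cdot>\<^sub>m 1\<^sub>m n \<in> carrier_mat n n"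
  by (rule minus_carrier_mat) simp

lemma assoc3: "A \<in> carrier_mat n n \<Longrightarrow> B \<in> carrier_mat n n \<Longrightarrow> C \<in> carrier_mat n n \<Longrightarrow> A * B * C = A * (B * C)"
  by (rule assoc_mult_mat)

lemma mc: "A \<in> carrier_mat n n \<Longrightarrow> B \<in> carrier_mat n n \<Longrightarrow> A * B \<in> carrier_mat n n"
  by simp

primrec prodm :: "nat \<Rightarrow> 'a::semiring_1 mat list \<Rightarrow> 'a mat" where
  "prodm n [] = 1\<^sub>m n"
| "prodm n (X # Xs) = X * prodm n Xs"

lemma prodm_carrier: "(\<forall>X\<in>set Xs. X \<in> carrier_mat n n) \<Longrightarrow> prodm n Xs \<in> carrier_mat n n"
  by (induct Xs) auto

lemma prodm_append:
  "(\<forall>X\<in>set Xs. X \<in> carrier_mat n n) \<Longrightarrow> (\<forall>X\<in>set Ys. X \<in> carrier_mat n n) \<Longrightarrow>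
   prodm n (Xs @ Ys) = prodm n Xs * prodm n Ys"
proof (induct Xs)
  case Nil
  then show ?case using prodm_carrier[of Ys n] by simp
next
  case (Cons X Xs)
  then have X: "X \<in> carrier_mat n n" and IH: "prodm n (Xs @ Ys) = prodm n Xs * prodm n Ys" by auto
  have "prodm n ((X # Xs) @ Ys) = X * (prodm n Xs * prodm n Ys)" using IH by simp
  also have "\<dots> = (X * prodm n Xs) * prodm n Ys"
    using X prodm_carrier[of Xs n] prodm_carrier[of Ys n] Cons(2,3) by (simp add: assoc_mult_mat[symmetric, of X n n])
  finally show ?case by simp
qed

lemma map_concat_replicate: "map f (concat (replicate m xs)) = concat (replicate m (map f xs))"
  by (induct m) auto

lemma prodm_pairs:
  assumes "A \<in> carrier_mat n n" "B \<in> carrier_mat n n"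
  shows "prodm n (concat (replicate m [A,B])) = prodm n (replicate m (A * B))"
proof (induct m)
  case 0 then show ?case by simp
next
  case (Suc m)
  have c: "prodm n (replicate m (A * B)) \<in> carrier_mat n n" using assms by (intro prodm_carrier) auto
  have "prodm n (concat (replicate (Suc m) [A,B])) = A * (B * prodm n (replicate m (A * B)))"
    using Suc by simp
  also have "\<dots> = (A * B) * prodm n (replicate m (A * B))" using assms c by simp
  finally show ?case by simp
qed

lemma ut_CH_aux:
  fixes B :: "'a::comm_ring_1 mat"
  assumes B: "B \<in> carrier_mat n n" and ut: "upper_triangular B" and es: "diag_mat B = es"
  shows "k \<le> n \<Longrightarrow> i < n \<Longrightarrow> j < n \<Longrightarrow> k \<le> i \<Longrightarrow>
         prodm n (map (\<lambda>e. B - e \<cdot>\<^sub>m 1\<^sub>m n) (drop k es)) $$ (i,j) = 0"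
proof (induct "n - k" arbitrary: k i j)
  case 0 then show ?case by simp
next
  case (Suc r)
  have len: "length es = n" using es B unfolding diag_mat_def by auto
  have kn: "k < n" using Suc by simp
  have esk: "es ! k = B $$ (k,k)" using es B kn unfolding diag_mat_def by auto
  have dr: "drop k es = es ! k # drop (Suc k) es" using len kn by (simp add: Cons_nth_drop_Suc)
  define V where "V = prodm n (map (\<lambda>e. B - e \<cdot>\<^sub>m 1\<^sub>m n) (drop (Suc k) es))"
  have V: "V \<in> carrier_mat n n" unfolding V_def using B by (intro prodm_carrier) auto
  have IH: "\<And>l. l < n \<Longrightarrow> Suc k \<le> l \<Longrightarrow> V $$ (l, j) = 0"
    unfolding V_def using Suc by (intro Suc(1)) auto
  have X: "B - es ! k \<cdot>\<^sub>m 1\<^sub>m n \<in> carrier_mat n n" using B by simp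
  have "prodm n (map (\<lambda>e. B - e \<cdot>\<^sub>m 1\<^sub>m n) (drop k es)) = (B - es ! k \<cdot>\<^sub>m 1\<^sub>m n) * V"
    unfolding V_def dr by simp
  also have "\<dots> $$ (i,j) = (\<Sum>l<n. (B - es ! k \<cdot>\<^sub>m 1\<^sub>m n) $$ (i,l) * V $$ (l,j))"
    using mult_entry[OF X V Suc(4) Suc(5)] .
  also have "\<dots> = (\<Sum>l<n. 0)"
  proof (rule sum.cong, simp)
    fix l assume l: "l \<in> {..<n}"
    then have ln: "l < n" by simp
    show "(B - es ! k \<cdot>\<^sub>m 1\<^sub>m n) $$ (i,l) * V $$ (l,j) = 0"
    proof (cases "l < i")
      case True
      then have "B $$ (i,l) = 0" using ut Suc(4) B unfolding upper_triangular_def by auto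
      then show ?thesis using True ln Suc(4) B by simp
    next
      case False
      show ?thesis
      proof (cases "l = i")
        case True
        show ?thesis
        proof (cases "i = k")
          case True
          then show ?thesis using \<open>l = i\<close> esk ln B by simp
        next
          case False
          then have "V $$ (l,j) = 0" using IH[OF ln] \<open>l = i\<close> Suc(6) by simp
          then show ?thesis by simp
        qed
      next
        case False
        then have "V $$ (l,j) = 0" using IH[OF ln] \<open>\<not> l < i\<close> Suc(6) by simp
        then show ?thesis by simp
      qed
    qed
  qed
  finally show ?case by simp
qed

lemma ut_CH:
  fixes B :: "'a::comm_ring_1 mat"
  assumes B: "B \<in> carrier_mat n n" and ut: "upper_triangular B" and es: "diag_mat B = es"
  shows "prodm n (map (\<lambda>e. B - e \<cdot>\<^sub>m 1\<^sub>m n) es) = 0\<^sub>m n n"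
proof (rule eq_matI)
  have c: "prodm n (map (\<lambda>e. B - e \<cdot>\<^sub>m 1\<^sub>m n) es) \<in> carrier_mat n n" using B by (intro prodm_carrier) auto
  fix i j assume i: "i < dim_row (0\<^sub>m n n :: 'a mat)" and j: "j < dim_col (0\<^sub>m n n :: 'a mat)"
  show "prodm n (map (\<lambda>e. B - e \<cdot>\<^sub>m 1\<^sub>m n) es) $$ (i, j) = 0\<^sub>m n n $$ (i, j)"
    using ut_CH_aux[OF B ut es, of 0 i j] i j by simp
next
  show "dim_row (prodm n (map (\<lambda>e. B - e \<cdot>\<^sub>m 1\<^sub>m n) es)) = dim_row (0\<^sub>m n n :: 'a mat)"
    using prodm_carrier[of "map (\<lambda>e. B - e \<cdot>\<^sub>m 1\<^sub>m n) es" n] B by auto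
  show "dim_col (prodm n (map (\<lambda>e. B - e \<cdot>\<^sub>m 1\<^sub>m n) es)) = dim_col (0\<^sub>m n n :: 'a mat)"
    using prodm_carrier[of "map (\<lambda>e. B - e \<cdot>\<^sub>m 1\<^sub>m n) es" n] B by auto
qed

lemma sim_shift:
  fixes S :: "'a::comm_ring_1 mat"
  assumes "similar_mat_wit S B P Q" "S \<in> carrier_mat n n"
  shows "S - e \<cdot>\<^sub>m 1\<^sub>m n = P * (B - e \<cdot>\<^sub>m 1\<^sub>m n) * Q"
proof -
  from assms have B: "B \<in> carrier_mat n n" and P: "P \<in> carrier_mat n n" and Q: "Q \<in> carrier_mat n n"
    and PQ: "P * Q = 1\<^sub>m n" and S: "S = P * B * Q"
    unfolding similar_mat_wit_def Let_def by auto
  have "P * (B - e \<cdot>\<^sub>m 1\<^sub>m n) * Q = (P * B - P * (e \<cdot>\<^sub>m 1\<^sub>m n)) * Q"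
    using P B by (simp add: mult_minus_distrib_mat[OF P B])
  also have "\<dots> = P * B * Q - P * (e \<cdot>\<^sub>m 1\<^sub>m n) * Q"
    using P B Q by (intro minus_mult_distrib_mat) auto
  also have "P * (e \<cdot>\<^sub>m 1\<^sub>m n) = e \<cdot>\<^sub>m P"
    using mult_smult_distrib[OF P, of "1\<^sub>m n" n e] P by simp
  also have "(e \<cdot>\<^sub>m P) * Q = e \<cdot>\<^sub>m 1\<^sub>m n"
    using mult_smult_assoc_mat[OF P Q, of e] PQ by simp
  finally show ?thesis using S by simp
qed

lemma sim_prodm:
  fixes S :: "'a::comm_ring_1 mat"
  assumes sim: "similar_mat_wit S B P Q" and S: "S \<in> carrier_mat n n"
  shows "prodm n (map (\<lambda>e. S - e \<cdot>\<^sub>m 1\<^sub>m n) es) = P * prodm n (map (\<lambda>e. B - e \<cdot>\<^sub>m 1\<^sub>m n) es) * Q"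
proof (induct es)
  from sim S have B: "B \<in> carrier_mat n n" and P: "P \<in> carrier_mat n n" and Q: "Q \<in> carrier_mat n n"
    and PQ: "P * Q = 1\<^sub>m n" and QP: "Q * P = 1\<^sub>m n"
    unfolding similar_mat_wit_def Let_def by auto
  {
    case Nil
    show ?case using P Q PQ by simp
  next
    case (Cons e es)
    define W where "W = prodm n (map (\<lambda>e. B - e \<cdot>\<^sub>m 1\<^sub>m n) es)"
    have W: "W \<in> carrier_mat n n" unfolding W_def using B by (intro prodm_carrier) auto
    have E: "B - e \<cdot>\<^sub>m 1\<^sub>m n \<in> carrier_mat n n" using B by simp
    have "prodm n (map (\<lambda>e. S - e \<cdot>\<^sub>m 1\<^sub>m n) (e # es)) = (P * (B - e \<cdot>\<^sub>m 1\<^sub>m n) * Q) * (P * W * Q)"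
      using Cons sim_shift[OF sim S] unfolding W_def by simp
    also have "\<dots> = (P * (B - e \<cdot>\<^sub>m 1\<^sub>m n)) * (Q * (P * W * Q))"
      by (rule assoc3[OF mc[OF P E] Q mc[OF mc[OF P W] Q]])
    also have "Q * (P * W * Q) = (Q * P) * (W * Q)"
      using assoc3[OF P W Q] assoc3[OF Q P mc[OF W Q]] by simp
    also have "\<dots> = W * Q" using QP W Q by simp
    also have "(P * (B - e \<cdot>\<^sub>m 1\<^sub>m n)) * (W * Q) = P * ((B - e \<cdot>\<^sub>m 1\<^sub>m n) * W) * Q"
      using assoc3[OF P E mc[OF W Q]] assoc3[OF E W Q] assoc3[OF P mc[OF E W] Q] by simp
    finally show ?case unfolding W_def by simp
  }
qed

lemma sym_sq:
  fixes N :: "real mat"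
  assumes N: "N \<in> carrier_mat n n" and sym: "transpose_mat N = N" and Y: "Y \<in> carrier_mat n n"
    and z: "N * (N * Y) = 0\<^sub>m n n"
  shows "N * Y = 0\<^sub>m n n"
proof -
  define V where "V = N * Y"
  have V: "V \<in> carrier_mat n n" unfolding V_def using N Y by simp
  have "transpose_mat V * V = transpose_mat Y * transpose_mat N * (N * Y)"
    unfolding V_def using N Y by (simp add: transpose_mult)
  also have "\<dots> = transpose_mat Y * (N * (N * Y))" unfolding sym
    by (rule assoc_mult_mat[of _ n n N n "N * Y" n]) (use N Y in auto)
  also have "\<dots> = 0\<^sub>m n n" unfolding z using Y by simp
  finally have VV: "transpose_mat V * V = 0\<^sub>m n n" .
  show ?thesis unfolding V_def[symmetric]
  proof (rule eq_matI)
    fix i j assume i: "i < dim_row (0\<^sub>m n n :: real mat)" and j: "j < dim_col (0\<^sub>m n n :: real mat)"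
    have "(\<Sum>k<n. V $$ (k,j) * V $$ (k,j)) = (transpose_mat V * V) $$ (j,j)"
      using mult_entry[of "transpose_mat V" n n V n j j] V j by simp
    also have "\<dots> = 0" using VV j by simp
    finally have "\<forall>k\<in>{..<n}. V $$ (k,j) * V $$ (k,j) = 0"
      by (subst sum_nonneg_eq_0_iff[symmetric]) auto
    then show "V $$ (i,j) = 0\<^sub>m n n $$ (i,j)" using i j by simp
  qed (use V in auto)
qed

lemma reduce_pow:
  fixes N :: "real mat"
  assumes N: "N \<in> carrier_mat n n" and sym: "transpose_mat N = N" and Z: "Z \<in> carrier_mat n n"
  shows "prodm n (replicate (Suc k) N) * Z = 0\<^sub>m n n \<Longrightarrow> N * Z = 0\<^sub>m n n"
proof (induct k)
  case 0 then show ?case using N by simp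
next
  case (Suc k)
  define W where "W = prodm n (replicate k N)"
  have W: "W \<in> carrier_mat n n" unfolding W_def using N by (intro prodm_carrier) auto
  have "N * (N * (W * Z)) = prodm n (replicate (Suc (Suc k)) N) * Z"
  proof -
    have "prodm n (replicate (Suc (Suc k)) N) = N * (N * W)" unfolding W_def by simp
    then show ?thesis using assoc3[OF N mc[OF N W] Z] assoc3[OF N W Z] by simp
  qed
  then have "N * (N * (W * Z)) = 0\<^sub>m n n" using Suc(2) by simp
  then have "N * (W * Z) = 0\<^sub>m n n" using sym_sq[OF N sym] W Z by simp
  moreover have "prodm n (replicate (Suc k) N) = N * W" unfolding W_def by simp
  ultimately have "prodm n (replicate (Suc k) N) * Z = 0\<^sub>m n n" using assoc3[OF N W Z] by simp
  then show ?case by (rule Suc(1))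
qed

definition trm :: "nat \<Rightarrow> 'a::comm_ring_1 mat \<Rightarrow> 'a" where "trm n X = (\<Sum>i<n. X $$ (i,i))"

lemma trm_comm: assumes X: "X \<in> carrier_mat n n" and Y: "Y \<in> carrier_mat n n"
  shows "trm n (X * Y) = trm n (Y * X)"
proof -
  have "trm n (X * Y) = (\<Sum>i<n. \<Sum>k<n. X $$ (i,k) * Y $$ (k,i))"
    unfolding trm_def by (rule sum.cong, simp, rule mult_entry[OF X Y], auto)
  also have "\<dots> = (\<Sum>k<n. \<Sum>i<n. Y $$ (k,i) * X $$ (i,k))" by (subst sum.swap) (simp add: mult.commute)
  also have "\<dots> = trm n (Y * X)"
    unfolding trm_def by (rule sum.cong, simp, rule mult_entry[symmetric, OF Y X], auto)
  finally show ?thesis .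
qed

lemma trm_sim: assumes P: "P \<in> carrier_mat n n" and Q: "Q \<in> carrier_mat n n" and Y: "Y \<in> carrier_mat n n"
  and QP: "Q * P = 1\<^sub>m n"
  shows "trm n (P * Y * Q) = trm n Y"
proof -
  have "trm n (P * Y * Q) = trm n (Q * (P * Y))" by (rule trm_comm[OF mc[OF P Y] Q])
  also have "Q * (P * Y) = (Q * P) * Y" using assoc3[OF Q P Y] by simp
  also have "\<dots> = Y" using QP Y by simp
  finally show ?thesis .
qed

lemma trm_ut_sq: assumes B: "B \<in> carrier_mat n n" and ut: "upper_triangular B"
  shows "trm n (B * B) = (\<Sum>i<n. B $$ (i,i) * B $$ (i,i))"
  unfolding trm_def
proof (rule sum.cong, simp)
  fix i assume i: "i \<in> {..<n}"
  have "(B * B) $$ (i,i) = (\<Sum>k<n. B $$ (i,k) * B $$ (k,i))" using mult_entry[OF B B] i by simp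
  also have "\<dots> = (\<Sum>k<n. if k = i then B $$ (i,i) * B $$ (i,i) else 0)"
  proof (rule sum.cong, simp)
    fix k assume k: "k \<in> {..<n}"
    show "B $$ (i,k) * B $$ (k,i) = (if k = i then B $$ (i,i) * B $$ (i,i) else 0)"
    proof (cases "k < i")
      case True then show ?thesis using ut B i unfolding upper_triangular_def by auto
    next
      case False
      show ?thesis
      proof (cases "k = i")
        case False
        then have "i < k" using \<open>\<not> k < i\<close> by simp
        then show ?thesis using ut B k unfolding upper_triangular_def by auto
      qed simp
    qed
  qed
  also have "\<dots> = B $$ (i,i) * B $$ (i,i)" using i by simp
  finally show "(B * B) $$ (i,i) = B $$ (i,i) * B $$ (i,i)" .
qed

lemma shift_prod_entry:
  fixes A :: "'a::comm_ring_1 mat"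
  assumes A: "A \<in> carrier_mat n n" and i: "i < n" and j: "j < n"
  shows "((A - b \<cdot>\<^sub>m 1\<^sub>m n) * (A - a \<cdot>\<^sub>m 1\<^sub>m n)) $$ (i,j) =
    (A * A) $$ (i,j) - a * A $$ (i,j) - b * A $$ (i,j) + (if i = j then a * b else 0)"
proof -
  have "((A - b \<cdot>\<^sub>m 1\<^sub>m n) * (A - a \<cdot>\<^sub>m 1\<^sub>m n)) $$ (i,j) =
     (\<Sum>k<n. (A - b \<cdot>\<^sub>m 1\<^sub>m n) $$ (i,k) * (A - a \<cdot>\<^sub>m 1\<^sub>m n) $$ (k,j))"
    by (rule mult_entry) (use A i j in auto)
  also have "\<dots> = (\<Sum>k<n. A $$ (i,k) * A $$ (k,j) - (if k = j then a * A $$ (i,j) else 0)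
       - (if k = i then b * A $$ (i,j) else 0) + (if k = i then (if i = j then a * b else 0) else 0))"
    by (rule sum.cong, simp) (use A i j in \<open>auto simp: algebra_simps\<close>)
  also have "\<dots> = (\<Sum>k<n. A $$ (i,k) * A $$ (k,j)) - a * A $$ (i,j) - b * A $$ (i,j) + (if i = j then a * b else 0)"
    using i j by (simp add: sum.distrib sum_subtractf)
  also have "(\<Sum>k<n. A $$ (i,k) * A $$ (k,j)) = (A * A) $$ (i,j)" by (rule mult_entry[symmetric]) (use A i j in auto)
  finally show ?thesis .
qed

lemma prodm_map_hom: "(\<forall>X\<in>set Xs. X \<in> carrier_mat n n) \<Longrightarrow>
   map_mat complex_of_real (prodm n Xs) = prodm n (map (map_mat complex_of_real) Xs)"
proof (induct Xs)
  case Nil then show ?case by (simp add: of_real_hom.mat_hom_one)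
next
  case (Cons X Xs)
  then have X: "X \<in> carrier_mat n n" and c: "prodm n Xs \<in> carrier_mat n n"
    and IH: "map_mat complex_of_real (prodm n Xs) = prodm n (map (map_mat complex_of_real) Xs)" by (auto intro: prodm_carrier)
  have "map_mat complex_of_real (prodm n (X # Xs)) = map_mat complex_of_real X * map_mat complex_of_real (prodm n Xs)"
    using of_real_hom.mat_hom_mult[OF X c] by simp
  also have "\<dots> = prodm n (map (map_mat complex_of_real) (X # Xs))" unfolding IH by simp
  finally show ?case .
qed

lemma sum_list_concat_replicate: "sum_list (map g (concat (replicate k xs))) = of_nat k * sum_list (map g xs)"
  by (induct k) (auto simp: algebra_simps)

lemma prod_list_concat_replicate: "prod_list (map g (concat (replicate k xs))) = prod_list (map g xs) ^ k"
  by (induct k) (auto simp: algebra_simps)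

lemma partB:
  fixes n d :: nat and S :: "complex mat" and tf :: "nat \<Rightarrow> nat \<Rightarrow> int" and m :: "nat \<Rightarrow> nat \<Rightarrow> real"
    and \<theta> \<phi> :: real
  assumes n: "n = 2*d" and d2: "d \<ge> 2" and S: "S \<in> carrier_mat n n"
    and Sent: "\<And>x y. x < n \<Longrightarrow> y < n \<Longrightarrow> S $$ (x,y) = \<i> * complex_of_int (tf x y)"
    and anti: "\<And>x y. x < n \<Longrightarrow> y < n \<Longrightarrow> tf y x = - tf x y"
    and pm1: "\<And>x y. x < n \<Longrightarrow> y < n \<Longrightarrow> x \<noteq> y \<Longrightarrow> tf x y = 1 \<or> tf x y = -1"
    and diag0: "\<And>x. x < n \<Longrightarrow> tf x x = 0"
    and mdef: "\<And>x z. m x z = - (\<Sum>y<n. real_of_int (tf x y) * real_of_int (tf y z))"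
    and cp: "char_poly S =
           [:complex_of_real \<theta>, 1:] * [:complex_of_real \<phi>, 1:] ^ (d - 1)
           * [:- complex_of_real \<phi>, 1:] ^ (d - 1) * [:- complex_of_real \<theta>, 1:]"
  shows "\<And>x z. x<n \<Longrightarrow> z<n \<Longrightarrow> (\<Sum>y<n. (m x y - (if x = y then \<phi>\<^sup>2 else 0)) * (m y z - (if y = z then \<theta>\<^sup>2 else 0))) = 0"
    and "(\<Sum>x<n. m x x) = 2*(real d - 1)*\<phi>\<^sup>2 + 2*\<theta>\<^sup>2"
    and "\<And>x z. x<n \<Longrightarrow> z<n \<Longrightarrow> (S * S) $$ (x,z) = complex_of_real (m x z)"
proof -
  note sq = partA_sq[OF anti pm1 diag0 mdef]
  define Mr where "Mr = mat n n (\<lambda>(x,z). m x z)"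
  have Mr: "Mr \<in> carrier_mat n n" unfolding Mr_def by simp
  have SS: "S * S = map_mat complex_of_real Mr"
  proof (rule eq_matI)
    fix x z assume x: "x < dim_row (map_mat complex_of_real Mr)" and z: "z < dim_col (map_mat complex_of_real Mr)"
    then have x: "x < n" and z: "z < n" using Mr by auto
    have "(S * S) $$ (x,z) = (\<Sum>y<n. S $$ (x,y) * S $$ (y,z))" by (rule mult_entry[OF S S x z])
    also have "\<dots> = (\<Sum>y<n. - complex_of_real (real_of_int (tf x y) * real_of_int (tf y z)))"
    proof (rule sum.cong, simp)
      fix y assume "y \<in> {..<n}"
      then have y: "y < n" by simp
      have "S $$ (x,y) * S $$ (y,z) = (\<i> * \<i>) * (complex_of_int (tf x y) * complex_of_int (tf y z))"
        unfolding Sent[OF x y] Sent[OF y z] by (simp add: algebra_simps)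
      also have "\<dots> = - complex_of_real (real_of_int (tf x y) * real_of_int (tf y z))" by simp
      finally show "S $$ (x,y) * S $$ (y,z) = - complex_of_real (real_of_int (tf x y) * real_of_int (tf y z))" .
    qed
    also have "\<dots> = complex_of_real (m x z)" unfolding mdef by (simp add: sum_negf)
    also have "\<dots> = map_mat complex_of_real Mr $$ (x,z)" unfolding Mr_def using x z by simp
    finally show "(S * S) $$ (x,z) = map_mat complex_of_real Mr $$ (x,z)" .
  qed (use S Mr in auto)
  show "\<And>x z. x<n \<Longrightarrow> z<n \<Longrightarrow> (S * S) $$ (x,z) = complex_of_real (m x z)"
    unfolding SS Mr_def by simp
  define g where "g e = S - e \<cdot>\<^sub>m 1\<^sub>m n" for e
  have gc: "g e \<in> carrier_mat n n" for e unfolding g_def using S by simp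
  have fac: "g (complex_of_real (- r)) * g (complex_of_real r) = map_mat complex_of_real (Mr - (r*r) \<cdot>\<^sub>m 1\<^sub>m n)" for r
  proof (rule eq_matI)
    fix x z assume x: "x < dim_row (map_mat complex_of_real (Mr - (r*r) \<cdot>\<^sub>m 1\<^sub>m n))"
      and z: "z < dim_col (map_mat complex_of_real (Mr - (r*r) \<cdot>\<^sub>m 1\<^sub>m n))"
    then have x: "x < n" and z: "z < n" using Mr by auto
    show "(g (complex_of_real (- r)) * g (complex_of_real r)) $$ (x,z) = map_mat complex_of_real (Mr - (r*r) \<cdot>\<^sub>m 1\<^sub>m n) $$ (x,z)"
      unfolding g_def shift_prod_entry[OF S x z] SS using x z Mr by (simp add: Mr_def)
  qed (use gc Mr in auto)
  define es where "es = concat (replicate (d-1) [complex_of_real (- \<phi>), complex_of_real \<phi>]) @ [complex_of_real (- \<theta>), complex_of_real \<theta>]"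
  have cpes: "char_poly S = (\<Prod>e\<leftarrow>es. [:- e, 1:])"
  proof -
    have "(\<Prod>e\<leftarrow>es. [:- e, 1:]) = ([:complex_of_real \<phi>, 1:] * ([:- complex_of_real \<phi>, 1:] * 1)) ^ (d - 1)
        * ([:complex_of_real \<theta>, 1:] * ([:- complex_of_real \<theta>, 1:] * 1))"
      unfolding es_def by (simp only: map_append prod_list.append prod_list_concat_replicate list.map
        prod_list.Cons prod_list.Nil of_real_minus minus_minus)
    then show ?thesis unfolding cp by (simp only: power_mult_distrib mult_1_right mult_1_left power_one mult.assoc mult.commute mult.left_commute)
  qed
  obtain B P Q where sch: "schur_decomposition S es = (B,P,Q)" by (cases "schur_decomposition S es") auto
  from schur_decomposition[OF S cpes sch]
  have sim: "similar_mat_wit S B P Q" and ut: "upper_triangular B" and dg: "diag_mat B = es" by auto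
  note wit = similar_mat_witD2[OF S sim]
  have B: "B \<in> carrier_mat n n" and P: "P \<in> carrier_mat n n" and Q: "Q \<in> carrier_mat n n" using wit by auto
  have CH: "prodm n (map g es) = 0\<^sub>m n n"
    unfolding g_def sim_prodm[OF sim S] ut_CH[OF B ut dg] using P Q by simp
  define Nr where "Nr = Mr - (\<phi>*\<phi>) \<cdot>\<^sub>m 1\<^sub>m n"
  define Xr where "Xr = Mr - (\<theta>*\<theta>) \<cdot>\<^sub>m 1\<^sub>m n"
  have Nr: "Nr \<in> carrier_mat n n" and Xr: "Xr \<in> carrier_mat n n" unfolding Nr_def Xr_def using Mr by auto
  have "map g es = concat (replicate (d-1) [g (complex_of_real (- \<phi>)), g (complex_of_real \<phi>)])
      @ [g (complex_of_real (- \<theta>)), g (complex_of_real \<theta>)]"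
    unfolding es_def by (simp add: map_concat_replicate)
  then have "prodm n (map g es) = prodm n (concat (replicate (d-1) [g (complex_of_real (- \<phi>)), g (complex_of_real \<phi>)]))
      * prodm n [g (complex_of_real (- \<theta>)), g (complex_of_real \<theta>)]"
    using gc by (simp add: prodm_append)
  also have "prodm n (concat (replicate (d-1) [g (complex_of_real (- \<phi>)), g (complex_of_real \<phi>)]))
     = prodm n (replicate (d-1) (map_mat complex_of_real Nr))"
    unfolding prodm_pairs[OF gc gc] fac Nr_def ..
  also have "\<dots> = map_mat complex_of_real (prodm n (replicate (d-1) Nr))"
    using prodm_map_hom[of "replicate (d-1) Nr" n] Nr by simp
  also have "prodm n [g (complex_of_real (- \<theta>)), g (complex_of_real \<theta>)] = map_mat complex_of_real Xr"
    using fac[of \<theta>] right_mult_one_mat[OF gc] unfolding Xr_def by simp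
  finally have "map_mat complex_of_real (prodm n (replicate (d-1) Nr)) * map_mat complex_of_real Xr = 0\<^sub>m n n"
    using CH by simp
  then have "map_mat complex_of_real (prodm n (replicate (d-1) Nr) * Xr) = 0\<^sub>m n n"
    by (subst of_real_hom.mat_hom_mult[OF prodm_carrier[of "replicate (d-1) Nr" n] Xr]) (use Nr in auto)
  then have W0: "prodm n (replicate (Suc (d-2)) Nr) * Xr = 0\<^sub>m n n"
  proof -
    assume h: "map_mat complex_of_real (prodm n (replicate (d-1) Nr) * Xr) = 0\<^sub>m n n"
    have e: "Suc (d-2) = d - 1" using d2 by simp
    have c: "prodm n (replicate (d-1) Nr) * Xr \<in> carrier_mat n n" using prodm_carrier[of "replicate (d-1) Nr" n] Nr Xr by simp
    show ?thesis unfolding e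
    proof (rule eq_matI)
      fix i j assume "i < dim_row (0\<^sub>m n n :: real mat)" "j < dim_col (0\<^sub>m n n :: real mat)"
      then have i: "i < n" and j: "j < n" by auto
      have "complex_of_real ((prodm n (replicate (d-1) Nr) * Xr) $$ (i,j)) = 0"
        using arg_cong[OF h, of "\<lambda>M. M $$ (i,j)"] c[unfolded carrier_mat_def] i j by simp
      then show "(prodm n (replicate (d-1) Nr) * Xr) $$ (i,j) = 0\<^sub>m n n $$ (i,j)" using i j by simp
    qed (use c in auto)
  qed
  have Nsym: "transpose_mat Nr = Nr"
  proof (rule eq_matI)
    fix i j assume "i < dim_row Nr" "j < dim_col Nr"
    then have i: "i < n" and j: "j < n" using Nr by auto
    have "m j i = m i j" using sq(1) i j by blast
    then show "transpose_mat Nr $$ (i,j) = Nr $$ (i,j)" unfolding Nr_def Mr_def using i j by auto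
  qed (use Nr in auto)
  have NX: "Nr * Xr = 0\<^sub>m n n" by (rule reduce_pow[OF Nr Nsym Xr W0])
  show "\<And>x z. x<n \<Longrightarrow> z<n \<Longrightarrow> (\<Sum>y<n. (m x y - (if x = y then \<phi>\<^sup>2 else 0)) * (m y z - (if y = z then \<theta>\<^sup>2 else 0))) = 0"
  proof -
    fix x z assume x: "x < n" and z: "z < n"
    have "(\<Sum>y<n. (m x y - (if x = y then \<phi>\<^sup>2 else 0)) * (m y z - (if y = z then \<theta>\<^sup>2 else 0))) = (\<Sum>y<n. Nr $$ (x,y) * Xr $$ (y,z))"
      by (rule sum.cong, simp) (use x z in \<open>auto simp: Nr_def Xr_def Mr_def power2_eq_square\<close>)
    also have "\<dots> = (Nr * Xr) $$ (x,z)" by (rule mult_entry[symmetric, OF Nr Xr x z])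
    also have "\<dots> = 0" unfolding NX using x z by simp
    finally show "(\<Sum>y<n. (m x y - (if x = y then \<phi>\<^sup>2 else 0)) * (m y z - (if y = z then \<theta>\<^sup>2 else 0))) = 0" .
  qed
  have "S * S = P * (B * B) * Q"
  proof -
    have "S ^\<^sub>m 2 = P * B ^\<^sub>m 2 * Q" by (rule similar_mat_wit_pow_id[OF sim])
    moreover have "S ^\<^sub>m 2 = S * S" using S by (simp add: numeral_2_eq_2)
    moreover have "B ^\<^sub>m 2 = B * B" using B by (simp add: numeral_2_eq_2)
    ultimately show ?thesis by simp
  qed
  then have "trm n (S * S) = trm n (B * B)" using trm_sim[OF P Q mc[OF B B]] wit by simp
  also have "\<dots> = (\<Sum>i<n. B $$ (i,i) * B $$ (i,i))" by (rule trm_ut_sq[OF B ut])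
  also have "\<dots> = sum_list (map (\<lambda>e. e * e) es)"
  proof -
    have "es = map (\<lambda>i. B $$ (i,i)) [0..<n]" using dg B unfolding diag_mat_def by auto
    then have "sum_list (map (\<lambda>e. e * e) es) = sum_list (map (\<lambda>i. B $$ (i,i) * B $$ (i,i)) [0..<n])" by (simp add: comp_def)
    also have "\<dots> = (\<Sum>i\<in>set [0..<n]. B $$ (i,i) * B $$ (i,i))" by (rule sum_set_upt_conv_sum_list_nat[symmetric])
    finally show ?thesis by (simp add: atLeast0LessThan)
  qed
  also have "\<dots> = complex_of_real (2*(real d - 1)*\<phi>\<^sup>2 + 2*\<theta>\<^sup>2)"
    unfolding es_def using d2 by (simp add: sum_list_concat_replicate power2_eq_square algebra_simps of_nat_diff)
  finally have t1: "trm n (S * S) = complex_of_real (2*(real d - 1)*\<phi>\<^sup>2 + 2*\<theta>\<^sup>2)" .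
  have "trm n (S * S) = complex_of_real (\<Sum>x<n. m x x)" unfolding trm_def SS Mr_def by simp
  with t1 show "(\<Sum>x<n. m x x) = 2*(real d - 1)*\<phi>\<^sup>2 + 2*\<theta>\<^sup>2" by (simp only: of_real_eq_iff)
qed

lemma mv_entry:
  assumes "A \<in> carrier_mat nr n" "v \<in> carrier_vec n" "i < nr"
  shows "(A *\<^sub>v v) $ i = (\<Sum>k<n. A $$ (i,k) * v $ k)"
  using assms by (simp add: scalar_prod_def atLeast0LessThan row_def)

lemma sum_lin:
  fixes k b :: complex
  shows "(\<Sum>y\<in>A. k * (- a y - b * e y)) = k * (- sum a A - b * sum e A)"
proof -
  have "(\<Sum>y\<in>A. k * (- a y - b * e y)) = (\<Sum>y\<in>A. (- k) * a y + (- k * b) * e y)"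
    by (rule sum.cong) (auto simp: algebra_simps)
  also have "\<dots> = (- k) * sum a A + (- k * b) * sum e A" by (simp only: sum.distrib sum_distrib_left)
  finally show ?thesis by (simp add: algebra_simps)
qed

lemma partC:
  fixes n :: nat and S :: "complex mat" and tf :: "nat \<Rightarrow> nat \<Rightarrow> int" and m :: "nat \<Rightarrow> nat \<Rightarrow> real"
    and \<theta> \<phi> :: real
  assumes S: "S \<in> carrier_mat n n" and npos: "n > 0"
    and Sent: "\<And>x y. x < n \<Longrightarrow> y < n \<Longrightarrow> S $$ (x,y) = \<i> * complex_of_int (tf x y)"
    and anti: "\<And>x y. x < n \<Longrightarrow> y < n \<Longrightarrow> tf y x = - tf x y"
    and msym: "\<And>x z. x < n \<Longrightarrow> z < n \<Longrightarrow> m x z = m z x"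
    and mdef: "\<And>x z. m x z = - (\<Sum>y<n. real_of_int (tf x y) * real_of_int (tf y z))"
    and ph: "0 < \<phi>" "\<phi> < \<theta>"
    and F1: "\<And>x z. x<n \<Longrightarrow> z<n \<Longrightarrow> (\<Sum>y<n. (m x y - (if x = y then \<phi>\<^sup>2 else 0)) * (m y z - (if y = z then \<theta>\<^sup>2 else 0))) = 0"
    and beta: "main_angle S (- \<phi>) = 0"
  shows "\<And>x. x < n \<Longrightarrow> (\<Sum>y<n. m x y) = \<theta>\<^sup>2"
proof -
  define T where "T x y = real_of_int (tf x y)" for x y
  define w where "w x = (\<Sum>z<n. m x z) - \<theta>\<^sup>2" for x
  define \<delta> where "\<delta> = \<theta>\<^sup>2 - \<phi>\<^sup>2"
  have dpos: "\<delta> > 0" unfolding \<delta>_def using ph by (simp add: power_strict_mono)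
  have mT: "\<And>x z. m x z = - (\<Sum>y<n. T x y * T y z)" unfolding T_def mdef ..
  have Tanti: "T y x = - T x y" if "x < n" "y < n" for x y unfolding T_def using anti[OF that] by simp
  have Mw: "(\<Sum>y<n. m x y * w y) = \<phi>\<^sup>2 * w x" if x: "x < n" for x
  proof -
    have "0 = (\<Sum>z<n. \<Sum>y<n. (m x y - (if x = y then \<phi>\<^sup>2 else 0)) * (m y z - (if y = z then \<theta>\<^sup>2 else 0)))"
      using F1[OF x] by simp
    also have "\<dots> = (\<Sum>y<n. (m x y - (if x = y then \<phi>\<^sup>2 else 0)) * (\<Sum>z<n. (m y z - (if y = z then \<theta>\<^sup>2 else 0))))"
      by (subst sum.swap) (simp add: sum_distrib_left)
    also have "\<dots> = (\<Sum>y<n. (m x y - (if x = y then \<phi>\<^sup>2 else 0)) * w y)"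
    proof (rule sum.cong, simp)
      fix y assume "y \<in> {..<n}"
      then have "(\<Sum>z<n. (m y z - (if y = z then \<theta>\<^sup>2 else 0))) = w y"
        unfolding w_def by (simp add: sum_subtractf)
      then show "(m x y - (if x = y then \<phi>\<^sup>2 else 0)) * (\<Sum>z<n. (m y z - (if y = z then \<theta>\<^sup>2 else 0))) =
          (m x y - (if x = y then \<phi>\<^sup>2 else 0)) * w y" by simp
    qed
    also have "\<dots> = (\<Sum>y<n. m x y * w y) - (\<Sum>y<n. (if x = y then \<phi>\<^sup>2 else 0) * w y)"
      by (simp add: left_diff_distrib sum_subtractf)
    also have "(\<Sum>y<n. (if x = y then \<phi>\<^sup>2 else 0) * w y) = (\<Sum>y<n. if y = x then \<phi>\<^sup>2 * w x else 0)"
      by (rule sum.cong) auto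
    also have "\<dots> = \<phi>\<^sup>2 * w x" using x by simp
    finally show ?thesis by simp
  qed
  define v where "v x = (\<Sum>y<n. T x y * w y)" for x
  have TTw: "(\<Sum>y<n. T x y * v y) = - \<phi>\<^sup>2 * w x" if x: "x < n" for x
  proof -
    have "(\<Sum>y<n. T x y * v y) = (\<Sum>y<n. \<Sum>z<n. T x y * T y z * w z)"
      unfolding v_def by (simp add: sum_distrib_left mult.assoc)
    also have "\<dots> = (\<Sum>z<n. (\<Sum>y<n. T x y * T y z) * w z)" by (subst sum.swap) (simp add: sum_distrib_right)
    also have "\<dots> = (\<Sum>z<n. - (m x z * w z))" unfolding mT by simp
    also have "\<dots> = - \<phi>\<^sup>2 * w x" using Mw[OF x] by (simp add: sum_negf)
    finally show ?thesis .
  qed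
  define c where "c = 1 / (2 * \<phi> * \<delta>)"
  define w0 where "w0 = vec n (\<lambda>x. complex_of_real c * (\<i> * complex_of_real (v x) - complex_of_real \<phi> * complex_of_real (w x)))"
  define j where "j = vec n (\<lambda>_. 1::complex)"
  have w0c: "w0 \<in> carrier_vec n" unfolding w0_def by simp
  have dimS: "dim_row S = n" using S by simp
  have Tc: "complex_of_int (tf x y) = complex_of_real (T x y)" for x y unfolding T_def by simp
  have w0eig: "w0 \<in> eigenspace S (- \<phi>)"
    unfolding eigenspace_def
  proof (intro CollectI conjI)
    show "w0 \<in> carrier_vec (dim_row S)" using w0c dimS by simp
    show "S *\<^sub>v w0 = complex_of_real (- \<phi>) \<cdot>\<^sub>v w0"
    proof (rule eq_vecI)
      fix x assume "x < dim_vec (complex_of_real (- \<phi>) \<cdot>\<^sub>v w0)"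
      then have x: "x < n" using w0c by simp
      have "(S *\<^sub>v w0) $ x = (\<Sum>y<n. S $$ (x,y) * w0 $ y)" by (rule mv_entry[OF S w0c x])
      also have "\<dots> = (\<Sum>y<n. complex_of_real c * (- complex_of_real (T x y * v y) - \<i> * complex_of_real \<phi> * complex_of_real (T x y * w y)))"
        by (rule sum.cong, simp) (simp add: Sent x w0_def Tc algebra_simps)
      also have "\<dots> = complex_of_real c * (- (\<Sum>y<n. complex_of_real (T x y * v y)) - \<i> * complex_of_real \<phi> * (\<Sum>y<n. complex_of_real (T x y * w y)))"
        by (rule sum_lin)
      also have "\<dots> = complex_of_real c * (- complex_of_real (\<Sum>y<n. T x y * v y) - \<i> * complex_of_real \<phi> * complex_of_real (v x))"
        unfolding v_def of_real_sum ..
      also have "\<dots> = complex_of_real (- \<phi>) * w0 $ x"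
        unfolding TTw[OF x] w0_def using x by (simp add: algebra_simps power2_eq_square)
      finally show "(S *\<^sub>v w0) $ x = (complex_of_real (- \<phi>) \<cdot>\<^sub>v w0) $ x" using x w0c by simp
    qed (use S w0c in simp)
  qed
  have orth: "cinner (j - w0) u = 0" if u: "u \<in> eigenspace S (- \<phi>)" for u
  proof -
    have uc: "u \<in> carrier_vec n" and ue: "S *\<^sub>v u = complex_of_real (- \<phi>) \<cdot>\<^sub>v u"
      using u dimS unfolding eigenspace_def by auto
    have E0: "(\<Sum>y<n. complex_of_real (T k y) * u $ y) = \<i> * complex_of_real \<phi> * u $ k" if k: "k < n" for k
    proof -
      have "\<i> * (\<Sum>y<n. complex_of_real (T k y) * u $ y) = (\<Sum>y<n. S $$ (k,y) * u $ y)"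
        by (simp add: sum_distrib_left Sent k Tc mult.assoc)
      also have "\<dots> = (S *\<^sub>v u) $ k" by (rule mv_entry[symmetric, OF S uc k])
      also have "\<dots> = - complex_of_real \<phi> * u $ k" unfolding ue using uc k by simp
      finally have "\<i> * (\<Sum>y<n. complex_of_real (T k y) * u $ y) = - complex_of_real \<phi> * u $ k" .
      then have "- \<i> * (\<i> * (\<Sum>y<n. complex_of_real (T k y) * u $ y)) = - \<i> * (- complex_of_real \<phi> * u $ k)" by simp
      then show ?thesis by (simp add: algebra_simps)
    qed
    have E1: "(\<Sum>y<n. complex_of_real (T k y) * cnj (u $ y)) = - \<i> * complex_of_real \<phi> * cnj (u $ k)" if k: "k < n" for k
    proof -
      have "cnj (\<Sum>y<n. complex_of_real (T k y) * u $ y) = cnj (\<i> * complex_of_real \<phi> * u $ k)" using E0[OF k] by simp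
      then show ?thesis by simp
    qed
    have E2: "(\<Sum>k<n. complex_of_real (v k) * cnj (u $ k)) = \<i> * complex_of_real \<phi> * (\<Sum>y<n. complex_of_real (w y) * cnj (u $ y))"
    proof -
      have "(\<Sum>k<n. complex_of_real (v k) * cnj (u $ k)) = (\<Sum>k<n. \<Sum>y<n. complex_of_real (w y) * (complex_of_real (T k y) * cnj (u $ k)))"
        unfolding v_def of_real_sum sum_distrib_right by (intro sum.cong refl) (simp add: algebra_simps)
      also have "\<dots> = (\<Sum>y<n. complex_of_real (w y) * (\<Sum>k<n. complex_of_real (T k y) * cnj (u $ k)))"
        by (subst sum.swap) (simp add: sum_distrib_left)
      also have "\<dots> = (\<Sum>y<n. complex_of_real (w y) * (- (\<Sum>k<n. complex_of_real (T y k) * cnj (u $ k))))"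
      proof (rule sum.cong, simp)
        fix y assume y: "y \<in> {..<n}"
        have "(\<Sum>k<n. complex_of_real (T k y) * cnj (u $ k)) = (\<Sum>k<n. - (complex_of_real (T y k) * cnj (u $ k)))"
        proof (rule sum.cong, simp)
          fix k assume k: "k \<in> {..<n}"
          have "T k y = - T y k" using Tanti[of y k] y k by simp
          then show "complex_of_real (T k y) * cnj (u $ k) = - (complex_of_real (T y k) * cnj (u $ k))" by simp
        qed
        then show "complex_of_real (w y) * (\<Sum>k<n. complex_of_real (T k y) * cnj (u $ k)) =
          complex_of_real (w y) * (- (\<Sum>k<n. complex_of_real (T y k) * cnj (u $ k)))" by (simp add: sum_negf)
      qed
      also have "\<dots> = (\<Sum>y<n. complex_of_real (w y) * (\<i> * complex_of_real \<phi> * cnj (u $ y)))"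
        by (rule sum.cong, simp) (simp add: E1)
      also have "\<dots> = \<i> * complex_of_real \<phi> * (\<Sum>y<n. complex_of_real (w y) * cnj (u $ y))"
        by (simp add: sum_distrib_left algebra_simps)
      finally show ?thesis .
    qed
    have E3: "(\<Sum>y<n. complex_of_real (m z y) * cnj (u $ y)) = complex_of_real (\<phi>\<^sup>2) * cnj (u $ z)" if z: "z < n" for z
    proof -
      have "(\<Sum>y<n. complex_of_real (m z y) * cnj (u $ y)) = (\<Sum>y<n. \<Sum>k<n. - (complex_of_real (T z k) * (complex_of_real (T k y) * cnj (u $ y))))"
        unfolding mT of_real_minus of_real_sum sum_distrib_right sum_negf[symmetric] by (intro sum.cong refl) (simp add: algebra_simps)
      also have "\<dots> = (\<Sum>k<n. - (complex_of_real (T z k) * (\<Sum>y<n. complex_of_real (T k y) * cnj (u $ y))))"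
        by (subst sum.swap) (simp add: sum_distrib_left sum_negf)
      also have "\<dots> = (\<Sum>k<n. \<i> * complex_of_real \<phi> * (complex_of_real (T z k) * cnj (u $ k)))"
      proof (rule sum.cong, simp)
        fix k assume "k \<in> {..<n}"
        then have k: "k < n" by simp
        show "- (complex_of_real (T z k) * (\<Sum>y<n. complex_of_real (T k y) * cnj (u $ y))) =
          \<i> * complex_of_real \<phi> * (complex_of_real (T z k) * cnj (u $ k))"
          unfolding E1[OF k] by (simp add: algebra_simps)
      qed
      also have "\<dots> = \<i> * complex_of_real \<phi> * (\<Sum>k<n. complex_of_real (T z k) * cnj (u $ k))"
        by (simp add: sum_distrib_left)
      also have "\<dots> = complex_of_real (\<phi>\<^sup>2) * cnj (u $ z)" unfolding E1[OF z] by (simp add: algebra_simps power2_eq_square)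
      finally show ?thesis .
    qed
    have E4: "(\<Sum>y<n. complex_of_real (w y) * cnj (u $ y)) = - complex_of_real \<delta> * (\<Sum>y<n. cnj (u $ y))"
    proof -
      have "(\<Sum>y<n. complex_of_real (w y) * cnj (u $ y)) =
          (\<Sum>y<n. \<Sum>z<n. complex_of_real (m y z) * cnj (u $ y)) - complex_of_real (\<theta>\<^sup>2) * (\<Sum>y<n. cnj (u $ y))"
        unfolding w_def by (simp add: algebra_simps sum_distrib_right sum_distrib_left sum_subtractf)
      also have "(\<Sum>y<n. \<Sum>z<n. complex_of_real (m y z) * cnj (u $ y)) = (\<Sum>z<n. \<Sum>y<n. complex_of_real (m z y) * cnj (u $ y))"
        by (subst sum.swap) (intro sum.cong refl, simp add: msym)
      also have "\<dots> = (\<Sum>z<n. complex_of_real (\<phi>\<^sup>2) * cnj (u $ z))" by (rule sum.cong, simp) (simp add: E3)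
      finally show ?thesis unfolding \<delta>_def by (simp add: sum_distrib_left algebra_simps)
    qed
    have "cinner (j - w0) u = (\<Sum>k<n. (1 - w0 $ k) * cnj (u $ k))"
      unfolding cinner_def j_def using w0c by simp
    also have "\<dots> = (\<Sum>k<n. cnj (u $ k)) - (\<Sum>k<n. w0 $ k * cnj (u $ k))"
      by (simp add: left_diff_distrib sum_subtractf)
    also have "(\<Sum>k<n. w0 $ k * cnj (u $ k)) = complex_of_real c * (\<i> * (\<Sum>k<n. complex_of_real (v k) * cnj (u $ k))
        - complex_of_real \<phi> * (\<Sum>k<n. complex_of_real (w k) * cnj (u $ k)))"
      unfolding w0_def by (simp add: algebra_simps sum_distrib_left sum_subtractf)
    also have "\<dots> = complex_of_real (2 * c * \<phi> * \<delta>) * (\<Sum>y<n. cnj (u $ y))"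
      unfolding E2 E4 by (simp add: algebra_simps)
    also have "2 * c * \<phi> * \<delta> = 1" unfolding c_def using ph dpos by simp
    finally show ?thesis by simp
  qed
  have proj: "eig_proj S (- \<phi>) j = w0"
    unfolding eig_proj_def
  proof (rule the_equality)
    show "w0 \<in> eigenspace S (- \<phi>) \<and> (\<forall>u\<in>eigenspace S (- \<phi>). cinner (j - w0) u = 0)" using w0eig orth by auto
  next
    fix w' assume h: "w' \<in> eigenspace S (- \<phi>) \<and> (\<forall>u\<in>eigenspace S (- \<phi>). cinner (j - w') u = 0)"
    then have w'c: "w' \<in> carrier_vec n" and w'e: "S *\<^sub>v w' = complex_of_real (- \<phi>) \<cdot>\<^sub>v w'"
      and o': "\<And>u. u \<in> eigenspace S (- \<phi>) \<Longrightarrow> cinner (j - w') u = 0" using dimS unfolding eigenspace_def by auto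
    have w0e: "S *\<^sub>v w0 = complex_of_real (- \<phi>) \<cdot>\<^sub>v w0" using w0eig unfolding eigenspace_def by auto
    define e where "e = w0 - w'"
    have ec: "e \<in> carrier_vec n" unfolding e_def using w0c w'c by simp
    have ee: "e \<in> eigenspace S (- \<phi>)" unfolding eigenspace_def
    proof (intro CollectI conjI)
      show "e \<in> carrier_vec (dim_row S)" using ec dimS by simp
      have "S *\<^sub>v e = S *\<^sub>v w0 - S *\<^sub>v w'" unfolding e_def by (rule mult_minus_distrib_mat_vec[OF S w0c w'c])
      also have "\<dots> = complex_of_real (- \<phi>) \<cdot>\<^sub>v e" unfolding w0e w'e e_def
        by (rule eq_vecI) (use w0c w'c in \<open>auto simp: algebra_simps\<close>)
      finally show "S *\<^sub>v e = complex_of_real (- \<phi>) \<cdot>\<^sub>v e" .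
    qed
    have "0 = cinner (j - w') e - cinner (j - w0) e" using o'[OF ee] orth[OF ee] by simp
    also have "\<dots> = (\<Sum>k<n. e $ k * cnj (e $ k))"
      unfolding cinner_def j_def e_def using w0c w'c by (simp add: sum_subtractf[symmetric] algebra_simps)
    also have "\<dots> = complex_of_real (\<Sum>k<n. (cmod (e $ k))\<^sup>2)"
      unfolding of_real_sum by (intro sum.cong refl) (rule complex_norm_square[symmetric])
    finally have "(\<Sum>k<n. (cmod (e $ k))\<^sup>2) = 0" by (metis of_real_eq_0_iff)
    then have "\<forall>k\<in>{..<n}. (cmod (e $ k))\<^sup>2 = 0" by (subst sum_nonneg_eq_0_iff[symmetric]) auto
    then have "\<And>k. k < n \<Longrightarrow> e $ k = 0" by simp
    then show "w' = w0" unfolding e_def using w0c w'c by (intro eq_vecI) (auto simp: algebra_simps)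
  qed
  have "cnorm w0 = 0"
  proof -
    have "main_angle S (- \<phi>) = cnorm w0 / sqrt (real n)"
      unfolding main_angle_def dimS j_def[symmetric] proj ..
    then show ?thesis using beta npos by simp
  qed
  then have "(\<Sum>k<n. (cmod (w0 $ k))\<^sup>2) = 0" unfolding cnorm_def using w0c by simp
  then have "\<forall>k\<in>{..<n}. (cmod (w0 $ k))\<^sup>2 = 0" by (subst sum_nonneg_eq_0_iff[symmetric]) auto
  then have w00: "\<And>k. k < n \<Longrightarrow> w0 $ k = 0" by simp
  fix x assume x: "x < n"
  have "Re (w0 $ x) = - c * \<phi> * w x" unfolding w0_def using x by simp
  then have "c * \<phi> * w x = 0" using w00[OF x] by simp
  moreover have "c \<noteq> 0" unfolding c_def using ph dpos by simp
  ultimately have "w x = 0" using ph by simp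
  then show "(\<Sum>y<n. m x y) = \<theta>\<^sup>2" unfolding w_def by simp
qed

lemma perm_entry:
  fixes M :: "'a::comm_ring_1 mat"
  assumes p: "p permutes {..<n}" and M: "M \<in> carrier_mat n n" and i: "i < n" and j: "j < n"
  shows "(perm_mat n p * M * transpose_mat (perm_mat n p)) $$ (i,j) = M $$ (p i, p j)"
proof -
  have pn: "p x < n" if "x < n" for x using permutes_in_image[OF p, of x] that by simp
  have PM: "perm_mat n p \<in> carrier_mat n n" unfolding perm_mat_def by simp
  have PMe: "perm_mat n p $$ (a,b) = (if p a = b then 1 else 0)" if "a < n" "b < n" for a b
    unfolding perm_mat_def using that by simp
  have PTe: "transpose_mat (perm_mat n p) $$ (a,b) = (if p b = a then 1 else 0)" if "a < n" "b < n" for a b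
    unfolding perm_mat_def using that by simp
  have PMM: "perm_mat n p * M \<in> carrier_mat n n" by (rule mc[OF PM M])
  have PT: "transpose_mat (perm_mat n p) \<in> carrier_mat n n" using PM by simp
  have e1: "(perm_mat n p * M) $$ (a,k) = M $$ (p a, k)" if a: "a < n" and k: "k < n" for a k
  proof -
    have "(perm_mat n p * M) $$ (a,k) = (\<Sum>l<n. perm_mat n p $$ (a,l) * M $$ (l,k))" by (rule mult_entry[OF PM M a k])
    also have "\<dots> = (\<Sum>l<n. if l = p a then M $$ (p a, k) else 0)"
      by (rule sum.cong) (auto simp: PMe a)
    also have "\<dots> = M $$ (p a, k)" using pn[OF a] by simp
    finally show ?thesis .
  qed
  have "(perm_mat n p * M * transpose_mat (perm_mat n p)) $$ (i,j) =
      (\<Sum>k<n. (perm_mat n p * M) $$ (i,k) * transpose_mat (perm_mat n p) $$ (k,j))"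
    by (rule mult_entry[OF PMM PT i j])
  also have "\<dots> = (\<Sum>k<n. if k = p j then M $$ (p i, p j) else 0)"
    by (rule sum.cong) (auto simp: e1 i j PTe)
  also have "\<dots> = M $$ (p i, p j)" using pn[OF j] by simp
  finally show ?thesis .
qed

lemma perm_block:
  fixes d :: nat and s :: "nat \<Rightarrow> bool" and M :: "complex mat" and k l :: nat
  assumes cs: "card {x. x < 2*d \<and> s x} = d" and M: "M \<in> carrier_mat (2*d) (2*d)"
    and Me: "\<And>x z. x < 2*d \<Longrightarrow> z < 2*d \<Longrightarrow> M $$ (x,z) = (if s x = s z then (if x = z then of_nat k else 0) + of_nat l else 0)"
  shows "perm_similar (2*d) (block_kIlJ d (of_nat k) (of_nat l)) M"
proof -
  define n where "n = 2*d"
  define P where "P = {x \<in> {..<n}. s x}"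
  define Q where "Q = {x \<in> {..<n}. \<not> s x}"
  have cP: "card P = d" unfolding P_def n_def using cs by (simp add: conj_commute)
  have PQ: "P \<union> Q = {..<n}" "P \<inter> Q = {}" unfolding P_def Q_def by auto
  have cQ: "card Q = d"
  proof -
    have "card P + card Q = n" using card_Un_disjoint[of P Q] PQ unfolding P_def Q_def by auto
    then show ?thesis using cP unfolding n_def by simp
  qed
  obtain f where f: "bij_betw f P {..<d}" using finite_same_card_bij[of P "{..<d}"] cP unfolding P_def by auto
  obtain g where g: "bij_betw g Q {d..<n}" using finite_same_card_bij[of Q "{d..<n}"] cQ unfolding Q_def n_def by auto
  define p where "p x = (if x < n then (if s x then f x else g x) else x)" for x
  have bP: "bij_betw p P {..<d}" using f by (subst bij_betw_cong[of P p f]) (auto simp: p_def P_def)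
  have bQ: "bij_betw p Q {d..<n}" using g by (subst bij_betw_cong[of Q p g]) (auto simp: p_def Q_def)
  have b: "bij_betw p {..<n} {..<n}"
  proof -
    have "bij_betw p (P \<union> Q) ({..<d} \<union> {d..<n})" by (rule bij_betw_combine[OF bP bQ]) auto
    moreover have "{..<d} \<union> {d..<n} = {..<n}" unfolding n_def by auto
    ultimately show ?thesis using PQ by simp
  qed
  have pp: "p permutes {..<n}" by (rule bij_imp_permutes[OF b]) (auto simp: p_def)
  have ps: "p x < d \<longleftrightarrow> s x" if x: "x < n" for x
  proof (cases "s x")
    case True
    then have "x \<in> P" unfolding P_def using x by simp
    then show ?thesis using bP True unfolding bij_betw_def by auto
  next
    case False
    then have "x \<in> Q" unfolding Q_def using x by simp
    then have "p x \<in> {d..<n}" using bQ unfolding bij_betw_def by auto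
    then show ?thesis using False by simp
  qed
  have pinj: "p x = p z \<longleftrightarrow> x = z" if "x < n" "z < n" for x z
    using bij_betw_imp_inj_on[OF b] that unfolding inj_on_def by auto
  have pn: "p x < n" if "x < n" for x using b that unfolding bij_betw_def by auto
  have Bc: "block_kIlJ d (of_nat k) (of_nat l) \<in> carrier_mat n n" unfolding block_kIlJ_def n_def by simp
  show ?thesis unfolding perm_similar_def n_def[symmetric]
  proof (intro exI conjI)
    show "p permutes {..<n}" by fact
    show "M = perm_mat n p * block_kIlJ d (of_nat k) (of_nat l) * transpose_mat (perm_mat n p)"
    proof (rule eq_matI)
      fix i j assume "i < dim_row (perm_mat n p * block_kIlJ d (of_nat k) (of_nat l) * transpose_mat (perm_mat n p))"
        "j < dim_col (perm_mat n p * block_kIlJ d (of_nat k) (of_nat l) * transpose_mat (perm_mat n p))"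
      then have i: "i < n" and j: "j < n" unfolding perm_mat_def by auto
      show "M $$ (i,j) = (perm_mat n p * block_kIlJ d (of_nat k) (of_nat l) * transpose_mat (perm_mat n p)) $$ (i,j)"
        unfolding perm_entry[OF pp Bc i j] using pn[OF i] pn[OF j] ps[OF i] ps[OF j] pinj[OF i j] Me i j
        unfolding n_def block_kIlJ_def by auto
    qed (use M in \<open>auto simp: perm_mat_def n_def\<close>)
  qed
qed

theorem lemma4p5:
  fixes d :: nat and A :: "int mat" and \<theta> \<phi> :: real
  assumes "d \<ge> 2"
    and "type3 (2*d) A"
    and "0 < \<phi>" and "\<phi> < \<theta>"
    and "char_poly (seidel A) =
           [:complex_of_real \<theta>, 1:] * [:complex_of_real \<phi>, 1:] ^ (d - 1)
           * [:- complex_of_real \<phi>, 1:] ^ (d - 1) * [:- complex_of_real \<theta>, 1:]"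
  shows "odd d \<and> (\<exists>k l :: nat. k > 0 \<and> l > 0 \<and>
           perm_similar (2*d) (block_kIlJ d (of_nat k) (of_nat l)) (seidel A * seidel A))"
proof -
  define n where "n = 2*d"
  have d2: "d \<ge> 2" and ph: "0 < \<phi>" "\<phi> < \<theta>" using assms by auto
  have npos: "n > 0" unfolding n_def using d2 by simp
  note t3 = assms(2)[unfolded type3_def Let_def n_def[symmetric]]
  have tour: "tournament_adj n A" using t3 by (rule conjunct1)
  have beta0: "main_angle (seidel A) (distinct_eigs (seidel A) ! 1) = 0"
    using t3[THEN conjunct2, THEN conjunct2, THEN conjunct2, THEN conjunct1] by simp
  have tA: "A \<in> carrier_mat n n \<and> (\<forall>x<n. A $$ (x,x) = 0) \<and> (\<forall>x<n. \<forall>y<n. x \<noteq> y \<longrightarrow>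
        (A $$ (x,y) = 1 \<and> A $$ (y,x) = 0) \<or> (A $$ (x,y) = 0 \<and> A $$ (y,x) = 1))"
    using tour unfolding tournament_adj_def .
  have A: "A \<in> carrier_mat n n" using tA by (rule conjunct1)
  have Aoff0: "\<forall>x<n. \<forall>y<n. x \<noteq> y \<longrightarrow>
        (A $$ (x,y) = 1 \<and> A $$ (y,x) = 0) \<or> (A $$ (x,y) = 0 \<and> A $$ (y,x) = 1)"
    using tA by (rule conjunct2[THEN conjunct2])
  have Aoff: "(A $$ (x,y) = 1 \<and> A $$ (y,x) = 0) \<or> (A $$ (x,y) = 0 \<and> A $$ (y,x) = 1)"
    if "x < n" "y < n" "x \<noteq> y" for x y
    using Aoff0 that by blast
  define S where "S = seidel A"
  have AT: "A - transpose_mat A \<in> carrier_mat n n" by (rule minus_carrier_mat) (use A in simp)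
  have S: "S \<in> carrier_mat n n" unfolding S_def seidel_def using AT by simp
  have dA: "dim_row A = n" "dim_col A = n" using A by auto
  define tf where "tf x y = A $$ (x,y) - A $$ (y,x)" for x y
  have Sent: "S $$ (x,y) = \<i> * complex_of_int (tf x y)" if "x < n" "y < n" for x y
    unfolding S_def seidel_def tf_def using dA that by simp
  have anti: "tf y x = - tf x y" if "x < n" "y < n" for x y unfolding tf_def by simp
  have pm1: "tf x y = 1 \<or> tf x y = -1" if "x < n" "y < n" "x \<noteq> y" for x y
    using Aoff[OF that] unfolding tf_def by auto
  have diag0: "tf x x = 0" if "x < n" for x unfolding tf_def by simp
  define m where "m x z = - (\<Sum>y<n. real_of_int (tf x y) * real_of_int (tf y z))" for x z
  have mdef: "\<And>x z. m x z = - (\<Sum>y<n. real_of_int (tf x y) * real_of_int (tf y z))" unfolding m_def ..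
  have cp: "char_poly S =
           [:complex_of_real \<theta>, 1:] * [:complex_of_real \<phi>, 1:] ^ (d - 1)
           * [:- complex_of_real \<phi>, 1:] ^ (d - 1) * [:- complex_of_real \<theta>, 1:]"
    unfolding S_def using assms(5) .
  note B = partB[OF n_def d2 S Sent anti pm1 diag0 mdef cp]
  note sq = partA_sq[OF anti pm1 diag0 mdef]
  have msym: "m x z = m z x" if "x < n" "z < n" for x z using sq(1) that by blast
  have eigset: "{t::real. eigenvalue S (complex_of_real t)} = {- \<theta>, - \<phi>, \<phi>, \<theta>}"
  proof -
    have "eigenvalue S (complex_of_real t) \<longleftrightarrow> (\<theta> + t) * (\<phi> + t) ^ (d - 1) * (- \<phi> + t) ^ (d - 1) * (- \<theta> + t) = 0" for t
    proof -
      have "poly (char_poly S) (complex_of_real t) =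
          complex_of_real ((\<theta> + t) * (\<phi> + t) ^ (d - 1) * (- \<phi> + t) ^ (d - 1) * (- \<theta> + t))"
        unfolding cp by (simp only: poly_mult poly_power poly_pCons poly_0 mult_zero_right add_0_right mult_1_right
          of_real_mult of_real_power of_real_add of_real_minus)
      then show ?thesis unfolding eigenvalue_root_char_poly[OF S] by (simp only: of_real_eq_0_iff)
    qed
    note eq = this
    have k0: "d - 1 \<noteq> 0" using d2 by simp
    have z: "((\<theta> + t) * (\<phi> + t) ^ (d - 1) * (- \<phi> + t) ^ (d - 1) * (- \<theta> + t) = 0) \<longleftrightarrow>
        (t = - \<theta> \<or> t = - \<phi> \<or> t = \<phi> \<or> t = \<theta>)" for t
      using k0 by (simp only: mult_eq_0_iff power_eq_0_iff) linarith
    show ?thesis unfolding set_eq_iff mem_Collect_eq insert_iff empty_iff eq z by simp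
  qed
  have de: "distinct_eigs S = [- \<theta>, - \<phi>, \<phi>, \<theta>]"
  proof -
    have sw: "sorted_wrt (<) [- \<theta>, - \<phi>, \<phi>, \<theta>]" using ph by simp
    have di: "distinct [- \<theta>, - \<phi>, \<phi>, \<theta>]" using ph by auto
    have "card {- \<theta>, - \<phi>, \<phi>, \<theta>} = length [- \<theta>, - \<phi>, \<phi>, \<theta>]"
      using distinct_card[OF di] by simp
    then have "sorted_list_of_set {- \<theta>, - \<phi>, \<phi>, \<theta>} = [- \<theta>, - \<phi>, \<phi>, \<theta>]"
      using sorted_list_of_set_unique[of "{- \<theta>, - \<phi>, \<phi>, \<theta>}" "[- \<theta>, - \<phi>, \<phi>, \<theta>]"] sw by simp
    then show ?thesis unfolding distinct_eigs_def eigset .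
  qed
  have beta: "main_angle S (- \<phi>) = 0" using beta0 de unfolding S_def by simp
  have rows: "\<And>x. x < n \<Longrightarrow> (\<Sum>y<n. m x y) = \<theta>\<^sup>2"
    by (rule partC[OF S npos Sent anti msym mdef ph B(1) beta]) auto
  have "odd d \<and> (\<exists>s::nat\<Rightarrow>bool. card {x. x<n \<and> s x} = d \<and> (\<exists>k l::nat. k>0 \<and> l>0 \<and>
     (\<forall>x<n. \<forall>z<n. m x z = (if s x = s z then (if x = z then real k else 0) + real l else 0))))"
    by (rule partA[OF n_def d2 anti pm1 diag0 mdef ph B(1) rows B(2)]) auto
  then obtain s k l where od: "odd d" and cs: "card {x. x<n \<and> s x} = d" and kl: "k > 0" "l > 0"
    and mf: "\<And>x z. x<n \<Longrightarrow> z<n \<Longrightarrow> m x z = (if s x = s z then (if x = z then real k else 0) + real l else 0)"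
    by blast
  have M: "S * S \<in> carrier_mat (2*d) (2*d)" using S unfolding n_def by simp
  have Me: "(S * S) $$ (x,z) = (if s x = s z then (if x = z then of_nat k else 0) + of_nat l else 0)"
    if "x < 2*d" "z < 2*d" for x z
  proof -
    have x: "x < n" and z: "z < n" using that unfolding n_def by auto
    have e: "(S * S) $$ (x,z) = complex_of_real (m x z)" by (rule B(3)) (use x z in auto)
    show ?thesis unfolding e mf[OF x z] by simp
  qed
  have "perm_similar (2*d) (block_kIlJ d (of_nat k) (of_nat l)) (S * S)"
    by (rule perm_block[OF cs[unfolded n_def] M Me])
  then show ?thesis using od kl unfolding S_def by blast
qed

end
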